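(* Let $Z$ be a domain, $\pi$ a probability distribution on $Z$, $0\le a\le b$, $\mathcal{F}$ a family of functions from $Z$ to $[a,b]$, $p\in(0,1)$ and $n\ge1$. The function $g:Z^n\to\mathbb{R}$, $g(X_1,\dots,X_n)=\mathsf{r}\mathsf{R}(\mathcal{F},\{X_1,\dots,X_n\},p)$, satisfies the bounded difference inequality with constants $c_i=\frac{|b-a|}{np}$, $1\le i\le n$.
   Context: For $\sigma_1,\dots,\sigma_n$ independent Rademacher random variables (each $\pm1$ with probability $1/2$), $\mathsf{r}\mathsf{R}(\mathcal{F},\{X_1,\dots,X_n\},p)=\mathbb{E}_\sigma\left[\sup_{f\in\mathcal{F}}\frac{1}{n\max\{p,\mathbb{E}_\pi[f]\}}\sum_{i=1}^n\sigma_if(X_i)\right]$, expectation over the $\sigma_i$ only. A function $g:\mathcal{X}^n\to\mathbb{R}$ satisfies the bounded difference inequality with nonnegative constants $c_1,\dots,c_n$ if for every $i$, $\sup_{x_1,\dots,x_n,x_i'\in\mathcal{X}}|g(x_1,\dots,x_n)-g(x_1,\dots,x_{i-1},x_i',x_{i+1},\dots,x_n)|\le c_i$. *)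

theory Defs
  imports "HOL-Probability.Probability"
begin

definition sign_vectors :: "nat \<Rightarrow> (nat \<Rightarrow> real) set" where
  "sign_vectors n = PiE {..<n} (\<lambda>_. {-1, 1})"

text \<open>Relative Rademacher complexity rR(F, {X_1..X_n}, p); the sample is X 0, ..., X (n-1),
  E_pi[f] is the Lebesgue integral w.r.t. pi, and the expectation over sigma is the
  uniform average over all 2^n sign vectors.\<close>
definition rR :: "('a \<Rightarrow> real) set \<Rightarrow> 'a measure \<Rightarrow> nat \<Rightarrow> (nat \<Rightarrow> 'a) \<Rightarrow> real \<Rightarrow> real" where
  "rR F \<pi> n X p =
     (\<Sum>\<sigma>\<in>sign_vectors n.
        (SUP f\<in>F. (\<Sum>i<n. \<sigma> i * f (X i)) / (real n * max p (integral\<^sup>L \<pi> f))))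
     / 2 ^ n"

definition bounded_difference :: "'a set \<Rightarrow> nat \<Rightarrow> ((nat \<Rightarrow> 'a) \<Rightarrow> real) \<Rightarrow> (nat \<Rightarrow> real) \<Rightarrow> bool" where
  "bounded_difference Z n g c \<longleftrightarrow>
     (\<forall>i<n. \<forall>x x'. (\<forall>j<n. x j \<in> Z) \<longrightarrow> x' \<in> Z \<longrightarrow> \<bar>g x - g (x(i := x'))\<bar> \<le> c i)"

end

theory Submission
  imports Defs
begin

lemma sup_diff_bound:
  fixes u v :: "'b \<Rightarrow> real"
  assumes bu: "bdd_above (u ` F)" and bv: "bdd_above (v ` F)" and c0: "0 \<le> c"
    and d: "\<And>f. f \<in> F \<Longrightarrow> \<bar>u f - v f\<bar> \<le> c"
  shows "\<bar>(SUP f\<in>F. u f) - (SUP f\<in>F. v f)\<bar> \<le> c"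
proof (cases "F = {}")
  case True
  then show ?thesis using c0 by simp
next
  case False
  have 1: "(SUP f\<in>F. u f) \<le> (SUP f\<in>F. v f) + c"
  proof (rule cSUP_least[OF False])
    fix f assume f: "f \<in> F"
    have "v f \<le> (SUP f\<in>F. v f)" using f bv by (auto intro: cSUP_upper)
    then show "u f \<le> (SUP f\<in>F. v f) + c" using d[OF f] by linarith
  qed
  have 2: "(SUP f\<in>F. v f) \<le> (SUP f\<in>F. u f) + c"
  proof (rule cSUP_least[OF False])
    fix f assume f: "f \<in> F"
    have "u f \<le> (SUP f\<in>F. u f)" using f bu by (auto intro: cSUP_upper)
    then show "v f \<le> (SUP f\<in>F. u f) + c" using d[OF f] by linarith
  qed
  show ?thesis using 1 2 by linarith
qed

lemma card_sign_vectors: "card (sign_vectors n) = 2 ^ n"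
  unfolding sign_vectors_def by (simp add: card_PiE numeral_2_eq_2)

theorem lemma6:
  fixes Z :: "'a set" and \<pi> :: "'a measure" and F :: "('a \<Rightarrow> real) set"
    and a b p :: real and n :: nat
  assumes "prob_space \<pi>" and "space \<pi> = Z"
    and "0 \<le> a" and "a \<le> b"
    and "\<forall>f\<in>F. \<forall>z\<in>Z. f z \<in> {a..b}"
    and "0 < p" and "p < 1"
    and "n \<ge> 1"
  shows "bounded_difference Z n (\<lambda>X. rR F \<pi> n X p) (\<lambda>i. \<bar>b - a\<bar> / (real n * p))"
  unfolding bounded_difference_def
proof (intro allI impI)
  fix i x x' assume i: "i < n" and xZ: "\<forall>j<n. x j \<in> Z" and x'Z: "x' \<in> Z"
  define c where "c = \<bar>b - a\<bar> / (real n * p)"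
  define y where "y = x(i := x')"
  have yZ: "\<forall>j<n. y j \<in> Z" using xZ x'Z by (simp add: y_def)
  have np: "real n * p > 0" using assms by simp
  define T where "T = (\<lambda>X \<sigma> f. (\<Sum>k<n. \<sigma> k * f (X k)) / (real n * max p (integral\<^sup>L \<pi> f)))"
  have den: "real n * max p (integral\<^sup>L \<pi> f) \<ge> real n * p" for f
    using assms by (intro mult_left_mono) auto
  have bnd: "\<bar>T X \<sigma> f\<bar> \<le> b / p" if XZ: "\<forall>j<n. X j \<in> Z" and s: "\<sigma> \<in> sign_vectors n" and f: "f \<in> F" for X \<sigma> f
  proof -
    have sk: "\<bar>\<sigma> k\<bar> = 1" if "k < n" for k proof -
      have "\<sigma> k \<in> {-1,1}" using s that unfolding sign_vectors_def by (auto dest: PiE_mem)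
      then show ?thesis by auto
    qed
    have "\<bar>\<Sum>k<n. \<sigma> k * f (X k)\<bar> \<le> (\<Sum>k<n. \<bar>\<sigma> k * f (X k)\<bar>)" by (rule sum_abs)
    also have "\<dots> \<le> (\<Sum>k<n. b)"
    proof (rule sum_mono)
      fix k assume "k \<in> {..<n}"
      then have "\<bar>\<sigma> k\<bar> = 1" "f (X k) \<in> {a..b}" using sk XZ f assms(5) by auto
      then show "\<bar>\<sigma> k * f (X k)\<bar> \<le> b" using assms(3) by (simp add: abs_mult)
    qed
    finally have num: "\<bar>\<Sum>k<n. \<sigma> k * f (X k)\<bar> \<le> real n * b" by simp
    have "\<bar>T X \<sigma> f\<bar> = \<bar>\<Sum>k<n. \<sigma> k * f (X k)\<bar> / (real n * max p (integral\<^sup>L \<pi> f))"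
      unfolding T_def using den[of f] np by (simp add: abs_divide)
    also have "\<dots> \<le> (real n * b) / (real n * p)"
      using num den[of f] np assms(3,4) by (intro frac_le) simp_all
    also have "\<dots> = b / p" using assms(8) by (intro mult_divide_mult_cancel_left) simp
    finally show ?thesis .
  qed
  have bdd: "bdd_above ((\<lambda>f. T X \<sigma> f) ` F)" if "\<forall>j<n. X j \<in> Z" "\<sigma> \<in> sign_vectors n" for X \<sigma>
    using bnd[OF that] by (intro bdd_aboveI[where M="b/p"]) (auto simp: abs_le_iff)
  have dif: "\<bar>T x \<sigma> f - T y \<sigma> f\<bar> \<le> c" if s: "\<sigma> \<in> sign_vectors n" and f: "f \<in> F" for \<sigma> f
  proof -
    have si: "\<bar>\<sigma> i\<bar> = 1" proof -
      have "\<sigma> i \<in> {-1,1}" using s i unfolding sign_vectors_def by (auto dest: PiE_mem)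
      then show ?thesis by auto
    qed
    have split: "(\<Sum>k<n. \<sigma> k * g k) = \<sigma> i * g i + (\<Sum>k\<in>{..<n}-{i}. \<sigma> k * g k)" for g :: "nat \<Rightarrow> real"
      using i by (subst sum.remove[of _ i]) auto
    have rest: "(\<Sum>k\<in>{..<n}-{i}. \<sigma> k * f (x k)) = (\<Sum>k\<in>{..<n}-{i}. \<sigma> k * f (y k))"
      by (rule sum.cong) (auto simp: y_def)
    have "(\<Sum>k<n. \<sigma> k * f (x k)) - (\<Sum>k<n. \<sigma> k * f (y k)) = \<sigma> i * (f (x i) - f x')"
    proof -
      have yi: "y i = x'" by (simp add: y_def)
      have "(\<Sum>k<n. \<sigma> k * f (x k)) - (\<Sum>k<n. \<sigma> k * f (y k)) = \<sigma> i * f (x i) - \<sigma> i * f (y i)"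
        using split[of "\<lambda>k. f (x k)"] split[of "\<lambda>k. f (y k)"] rest by linarith
      then show ?thesis unfolding yi by (simp add: right_diff_distrib)
    qed
    moreover have "\<bar>f (x i) - f x'\<bar> \<le> \<bar>b - a\<bar>"
    proof -
      have "f (x i) \<in> {a..b}" "f x' \<in> {a..b}" using f xZ x'Z i assms(5) by blast+
      then show ?thesis by (simp add: abs_le_iff)
    qed
    ultimately have num: "\<bar>(\<Sum>k<n. \<sigma> k * f (x k)) - (\<Sum>k<n. \<sigma> k * f (y k))\<bar> \<le> \<bar>b - a\<bar>"
      using si by (simp add: abs_mult)
    have "T x \<sigma> f - T y \<sigma> f = ((\<Sum>k<n. \<sigma> k * f (x k)) - (\<Sum>k<n. \<sigma> k * f (y k))) / (real n * max p (integral\<^sup>L \<pi> f))"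
      unfolding T_def by (simp add: diff_divide_distrib)
    then have "\<bar>T x \<sigma> f - T y \<sigma> f\<bar> = \<bar>(\<Sum>k<n. \<sigma> k * f (x k)) - (\<Sum>k<n. \<sigma> k * f (y k))\<bar> / (real n * max p (integral\<^sup>L \<pi> f))"
      using den[of f] np by (simp add: abs_divide)
    also have "\<dots> \<le> \<bar>b - a\<bar> / (real n * p)"
      using num den[of f] np by (intro frac_le) simp_all
    finally show ?thesis unfolding c_def .
  qed
  have c0: "0 \<le> c" unfolding c_def using np by simp
  have S: "\<bar>(SUP f\<in>F. T x \<sigma> f) - (SUP f\<in>F. T y \<sigma> f)\<bar> \<le> c" if "\<sigma> \<in> sign_vectors n" for \<sigma>
    by (rule sup_diff_bound[OF bdd[OF xZ that] bdd[OF yZ that] c0 dif[OF that]])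
  have fin: "finite (sign_vectors n)" unfolding sign_vectors_def by (intro finite_PiE) auto
  have "rR F \<pi> n x p - rR F \<pi> n y p = (\<Sum>\<sigma>\<in>sign_vectors n. (SUP f\<in>F. T x \<sigma> f) - (SUP f\<in>F. T y \<sigma> f)) / 2 ^ n"
    unfolding rR_def T_def by (simp add: sum_subtractf diff_divide_distrib)
  then have "\<bar>rR F \<pi> n x p - rR F \<pi> n y p\<bar> = \<bar>\<Sum>\<sigma>\<in>sign_vectors n. (SUP f\<in>F. T x \<sigma> f) - (SUP f\<in>F. T y \<sigma> f)\<bar> / 2 ^ n"
    by (simp add: abs_divide)
  also have "\<dots> \<le> (\<Sum>\<sigma>\<in>sign_vectors n. \<bar>(SUP f\<in>F. T x \<sigma> f) - (SUP f\<in>F. T y \<sigma> f)\<bar>) / 2 ^ n"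
    by (rule divide_right_mono[OF sum_abs]) simp
  also have "\<dots> \<le> (\<Sum>\<sigma>\<in>sign_vectors n. c) / 2 ^ n"
    by (rule divide_right_mono[OF sum_mono[OF S]]) simp_all
  also have "\<dots> = c" by (simp add: card_sign_vectors)
  finally show "\<bar>rR F \<pi> n x p - rR F \<pi> n (x(i := x')) p\<bar> \<le> \<bar>b - a\<bar> / (real n * p)"
    unfolding y_def c_def .
qed

end
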